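(* Let $T$ be a light tournament and let $z$ be a vertex of $T$ of minimum in-degree. Then the subtournament $T[V_2(z)]$ induced by the in-neighborhood of $z$ is $\mathcal{T}_5$-free.
   Context: A triangle of a tournament is a set of three vertices inducing a directed 3-cycle. An unordered pair $ab$ of vertices is a diagonal if there exist vertices $u,v$ with $\{u,v,a\}$ and $\{u,v,b\}$ both triangles. A triangle is heavy if at least two of its pairs are diagonals; a tournament is light if it has no heavy triangle. $V_2(z)=\{v: (v,z)\in A(T)\}$. A feedback vertex set of a tournament is a vertex set whose removal leaves an acyclic tournament. $\mathcal{T}_5$ is the set of tournaments on 5 vertices whose minimum feedback vertex set has size 2; a tournament is $\mathcal{T}_5$-free if it has no subtournament isomorphic to a member of $\mathcal{T}_5$. *)

theory Defs
  imports Main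
begin

definition tournament :: "'a set \<Rightarrow> ('a \<times> 'a) set \<Rightarrow> bool" where
  "tournament V A \<longleftrightarrow> finite V \<and> A \<subseteq> V \<times> V \<and>
     (\<forall>v\<in>V. (v, v) \<notin> A) \<and>
     (\<forall>u\<in>V. \<forall>v\<in>V. u \<noteq> v \<longrightarrow> ((u, v) \<in> A \<longleftrightarrow> (v, u) \<notin> A))"

definition induced_arcs :: "('a \<times> 'a) set \<Rightarrow> 'a set \<Rightarrow> ('a \<times> 'a) set" where
  "induced_arcs A S = A \<inter> (S \<times> S)"

definition triangle :: "'a set \<Rightarrow> ('a \<times> 'a) set \<Rightarrow> 'a set \<Rightarrow> bool" where
  "triangle V A X \<longleftrightarrow> X \<subseteq> V \<and> (\<exists>x y z. X = {x, y, z} \<and> x \<noteq> y \<and> y \<noteq> z \<and> x \<noteq> z \<and>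
      (x, y) \<in> A \<and> (y, z) \<in> A \<and> (z, x) \<in> A)"

definition diagonal :: "'a set \<Rightarrow> ('a \<times> 'a) set \<Rightarrow> 'a \<Rightarrow> 'a \<Rightarrow> bool" where
  "diagonal V A a b \<longleftrightarrow> a \<in> V \<and> b \<in> V \<and> a \<noteq> b \<and>
     (\<exists>u v. triangle V A {u, v, a} \<and> triangle V A {u, v, b})"

definition heavy_triangle :: "'a set \<Rightarrow> ('a \<times> 'a) set \<Rightarrow> 'a set \<Rightarrow> bool" where
  "heavy_triangle V A X \<longleftrightarrow> triangle V A X \<and>
     card {P. P \<subseteq> X \<and> card P = 2 \<and> (\<exists>a b. P = {a, b} \<and> diagonal V A a b)} \<ge> 2"

definition light :: "'a set \<Rightarrow> ('a \<times> 'a) set \<Rightarrow> bool" where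
  "light V A \<longleftrightarrow> tournament V A \<and> \<not> (\<exists>X. heavy_triangle V A X)"

definition in_nbrs :: "'a set \<Rightarrow> ('a \<times> 'a) set \<Rightarrow> 'a \<Rightarrow> 'a set" where
  "in_nbrs V A z = {v \<in> V. (v, z) \<in> A}"

definition in_degree :: "'a set \<Rightarrow> ('a \<times> 'a) set \<Rightarrow> 'a \<Rightarrow> nat" where
  "in_degree V A z = card (in_nbrs V A z)"

definition feedback_vertex_set :: "'a set \<Rightarrow> ('a \<times> 'a) set \<Rightarrow> 'a set \<Rightarrow> bool" where
  "feedback_vertex_set V A F \<longleftrightarrow> F \<subseteq> V \<and> acyclic (induced_arcs A (V - F))"

definition min_fvs_size :: "'a set \<Rightarrow> ('a \<times> 'a) set \<Rightarrow> nat" where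
  "min_fvs_size V A = (LEAST k. \<exists>F. feedback_vertex_set V A F \<and> card F = k)"

definition in_T5 :: "'a set \<Rightarrow> ('a \<times> 'a) set \<Rightarrow> bool" where
  "in_T5 V A \<longleftrightarrow> tournament V A \<and> card V = 5 \<and> min_fvs_size V A = 2"

(* \<T>_5-free: no subtournament (on a vertex subset S) isomorphic to a member of \<T>_5.
   Since \<T>_5 is closed under isomorphism, this is: no induced subtournament lies in \<T>_5. *)
definition T5_free :: "'a set \<Rightarrow> ('a \<times> 'a) set \<Rightarrow> bool" where
  "T5_free V A \<longleftrightarrow> \<not> (\<exists>S. S \<subseteq> V \<and> in_T5 S (induced_arcs A S))"

end

theory Submission
  imports Defs
begin

lemma tour_facts:
  assumes "tournament V A"
  shows "finite V" "A \<subseteq> V \<times> V" "\<And>v. (v,v) \<notin> A"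
    "\<And>u v. (u,v) \<in> A \<Longrightarrow> (v,u) \<notin> A"
    "\<And>u v. u \<in> V \<Longrightarrow> v \<in> V \<Longrightarrow> u \<noteq> v \<Longrightarrow> (u,v) \<notin> A \<Longrightarrow> (v,u) \<in> A"
proof -
  show "finite V" "A \<subseteq> V \<times> V" "\<And>v. (v,v) \<notin> A"
    "\<And>u v. u \<in> V \<Longrightarrow> v \<in> V \<Longrightarrow> u \<noteq> v \<Longrightarrow> (u,v) \<notin> A \<Longrightarrow> (v,u) \<in> A"
    using assms unfolding tournament_def by blast+
  show "\<And>u v. (u,v) \<in> A \<Longrightarrow> (v,u) \<notin> A"
    using assms unfolding tournament_def by (metis SigmaE subsetD prod.inject)
qed

lemma tri_I:
  assumes T: "tournament V A" and "(x,y) \<in> A" "(y,w) \<in> A" "(w,x) \<in> A"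
  shows "triangle V A {x,y,w}"
proof -
  note tf = tour_facts[OF T]
  have V: "x \<in> V" "y \<in> V" "w \<in> V" using assms(2-4) tf(2) by auto
  have "x \<noteq> y" "y \<noteq> w" "w \<noteq> x" using assms(2-4) tf(3) by metis+
  moreover have "x \<noteq> w" using assms(2-4) tf(4) by metis
  ultimately show ?thesis unfolding triangle_def using V assms(2-4) by blast
qed

lemma heavy_I:
  assumes "triangle V A X" "finite X" "diagonal V A p q" "diagonal V A r s"
    "{p,q} \<subseteq> X" "{r,s} \<subseteq> X" "{p,q} \<noteq> {r,s}"
  shows "heavy_triangle V A X"
proof -
  let ?P = "{P. P \<subseteq> X \<and> card P = 2 \<and> (\<exists>a b. P = {a, b} \<and> diagonal V A a b)}"
  have pq: "p \<noteq> q" "r \<noteq> s" using assms(3,4) unfolding diagonal_def by auto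
  have "{{p,q},{r,s}} \<subseteq> ?P" using assms pq by auto
  moreover have "?P \<subseteq> Pow X" by auto
  then have "finite ?P" using assms(2) by (simp add: finite_subset)
  ultimately have "card {{p,q},{r,s}} \<le> card ?P" by (rule card_mono[rotated])
  moreover have "card {{p,q},{r,s}} = 2" using assms(7) by simp
  ultimately show ?thesis unfolding heavy_triangle_def using assms(1) by simp
qed

lemma diag_I:
  "a \<in> V \<Longrightarrow> b \<in> V \<Longrightarrow> a \<noteq> b \<Longrightarrow> triangle V A {u,v,a} \<Longrightarrow> triangle V A {u,v,b}
   \<Longrightarrow> diagonal V A a b"
  unfolding diagonal_def by blast

lemma tri_sub: "triangle V A X \<Longrightarrow> X \<subseteq> V"
  unfolding triangle_def by simp

lemma F1:
  assumes T: "tournament V A" and "(x,z) \<in> A" "(y,z) \<in> A" "x \<noteq> y"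
    "(z,w) \<in> A" "(w,x) \<in> A" "(w,y) \<in> A"
  shows "diagonal V A x y"
proof -
  note tf = tour_facts[OF T]
  have t1: "triangle V A {z,w,x}" using tri_I[OF T, of z w x] assms by simp
  have t2: "triangle V A {z,w,y}" using tri_I[OF T, of z w y] assms by simp
  have "x \<in> V" "y \<in> V" using assms(2,3) tf(2) by auto
  then show ?thesis using diag_I[OF _ _ assms(4) t1 t2] by simp
qed

lemma ZX:
  assumes T: "tournament V A" and "(u,z) \<in> A" "(x,z) \<in> A" "(u,x) \<in> A"
    "(z,v) \<in> A" "(v,u) \<in> A" "(v,x) \<notin> A"
  shows "diagonal V A z x"
proof -
  note tf = tour_facts[OF T]
  have V: "x \<in> V" "z \<in> V" "v \<in> V" using assms(3,5) tf(2) by auto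
  have "x \<noteq> v" using assms(3,5) tf(4) by metis
  then have xv: "(x,v) \<in> A" using tf(5)[of v x] V assms(7) by auto
  have "triangle V A {u,z,v}" using tri_I[OF T, of u z v] assms by simp
  then have t1: "triangle V A {u,v,z}" by (simp add: insert_commute)
  have "triangle V A {u,x,v}" using tri_I[OF T, of u x v] assms xv by simp
  then have t2: "triangle V A {u,v,x}" by (simp add: insert_commute)
  have "z \<noteq> x" using assms(3) tf(3) by metis
  then show ?thesis using diag_I[OF _ _ _ t1 t2] V by simp
qed

lemma XW:
  assumes "triangle V A {p,q,x}" "triangle V A {p,q,w}" "x \<noteq> w"
  shows "diagonal V A x w"
proof -
  have "x \<in> V" "w \<in> V" using tri_sub[OF assms(1)] tri_sub[OF assms(2)] by auto
  then show ?thesis using diag_I[OF _ _ assms(3,1,2)] by simp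
qed

lemma ZW:
  assumes T: "tournament V A" and "(u,z) \<in> A" "(z,v) \<in> A" "(v,u) \<in> A"
    "(z,w) \<in> A" "(u,w) \<in> A" "(w,v) \<in> A"
  shows "diagonal V A z w"
proof -
  note tf = tour_facts[OF T]
  have V: "w \<in> V" "z \<in> V" using assms(5) tf(2) by auto
  have "triangle V A {u,z,v}" using tri_I[OF T, of u z v] assms by simp
  then have t1: "triangle V A {u,v,z}" by (simp add: insert_commute)
  have "triangle V A {v,u,w}" using tri_I[OF T, of v u w] assms by simp
  then have t2: "triangle V A {u,v,w}" by (simp add: insert_commute)
  have "z \<noteq> w" using assms(5) tf(3) by metis
  then show ?thesis using diag_I[OF _ _ _ t1 t2] V by simp
qed

lemma nonempty_D:
  assumes T: "tournament V A" and z: "z \<in> V"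
    and deg: "\<forall>v\<in>V. in_degree V A z \<le> in_degree V A v"
    and x: "(x,z) \<in> A"
  shows "\<exists>w. (z,w) \<in> A \<and> (w,x) \<in> A"
proof (rule ccontr)
  assume nw: "\<not> ?thesis"
  note tf = tour_facts[OF T]
  have xV: "x \<in> V" using x tf(2) by auto
  have sub: "in_nbrs V A x \<subseteq> in_nbrs V A z - {x}"
  proof
    fix w assume w: "w \<in> in_nbrs V A x"
    then have wV: "w \<in> V" and wx: "(w,x) \<in> A" unfolding in_nbrs_def by auto
    have "w \<noteq> x" using wx tf(3) by metis
    moreover have "w \<noteq> z" using wx x tf(4) by metis
    moreover have "(z,w) \<notin> A" using nw wx by auto
    ultimately show "w \<in> in_nbrs V A z - {x}" using tf(5)[of z w] wV z
      unfolding in_nbrs_def by auto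
  qed
  have fin: "finite (in_nbrs V A z)" using tf(1) unfolding in_nbrs_def by auto
  have xin: "x \<in> in_nbrs V A z" using x xV unfolding in_nbrs_def by auto
  have "card (in_nbrs V A x) \<le> card (in_nbrs V A z - {x})"
    using sub fin by (intro card_mono) auto
  also have "\<dots> < card (in_nbrs V A z)" using fin xin
    by (rule card_Diff1_less)
  finally have "in_degree V A x < in_degree V A z" unfolding in_degree_def .
  with deg xV show False by force
qed

lemma no_tri:
  assumes L: "light V A" and z: "z \<in> V"
    and deg: "\<forall>v\<in>V. in_degree V A z \<le> in_degree V A v"
    and a: "(a,z) \<in> A" and b: "(b,z) \<in> A" and d: "(d,z) \<in> A"
    and ab: "(a,b) \<in> A" and bd: "(b,d) \<in> A" and da: "(d,a) \<in> A"
  shows False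
proof -
  have T: "tournament V A" using L unfolding light_def by simp
  have nh: "\<And>X. \<not> heavy_triangle V A X" using L unfolding light_def by simp
  note tf = tour_facts[OF T]
  have H: "\<And>X p q r s. triangle V A X \<Longrightarrow> finite X \<Longrightarrow> diagonal V A p q \<Longrightarrow>
     diagonal V A r s \<Longrightarrow> {p,q} \<subseteq> X \<Longrightarrow> {r,s} \<subseteq> X \<Longrightarrow> {p,q} \<noteq> {r,s} \<Longrightarrow> False"
  proof -
    fix X p q r s
    assume h: "triangle V A X" "finite X" "diagonal V A p q" "diagonal V A r s"
      "{p,q} \<subseteq> X" "{r,s} \<subseteq> X" "{p,q} \<noteq> {r,s}"
    show False using heavy_I[OF h] nh by simp
  qed
  have neq: "\<And>x w. (x,z) \<in> A \<Longrightarrow> (z,w) \<in> A \<Longrightarrow> x \<noteq> w" using tf(4) by metis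
  have zneq: "\<And>w. (z,w) \<in> A \<Longrightarrow> z \<noteq> w" using tf(3) by metis
  have tot: "\<And>x w. (x,z) \<in> A \<Longrightarrow> (z,w) \<in> A \<Longrightarrow> (w,x) \<notin> A \<Longrightarrow> (x,w) \<in> A"
  proof -
    fix x w assume h: "(x,z) \<in> A" "(z,w) \<in> A" "(w,x) \<notin> A"
    have "x \<in> V" "w \<in> V" using h(1,2) tf(2) by auto
    then show "(x,w) \<in> A" using tf(5)[of w x] neq[OF h(1,2)] h(3) by auto
  qed
  have Tz: "\<And>x w. (x,z) \<in> A \<Longrightarrow> (z,w) \<in> A \<Longrightarrow> (w,x) \<in> A \<Longrightarrow> triangle V A {z,w,x}"
    using tri_I[OF T] by simp
  have NE: "\<And>x. (x,z) \<in> A \<Longrightarrow> \<exists>w. (z,w) \<in> A \<and> (w,x) \<in> A"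
    by (rule nonempty_D[OF T z deg])
  have anb: "a \<noteq> b" "b \<noteq> d" "a \<noteq> d" using ab bd da tf(3) tf(4)[OF ab] by auto
  have azn: "a \<noteq> z" "b \<noteq> z" "d \<noteq> z" using a b d tf(3) by auto
  have tabd: "triangle V A {a,b,d}" using tri_I[OF T, of a b d] ab bd da by simp
  have tadb: "triangle V A {a,d,b}" using tabd by (simp add: insert_commute)
  have tbda: "triangle V A {b,d,a}" using tabd by (simp add: insert_commute)
  show False
  proof (cases "\<forall>w. (z,w) \<in> A \<and> (w,a) \<in> A \<longrightarrow> (w,b) \<in> A")
    case True
    obtain w0 where w0: "(z,w0) \<in> A" "(w0,a) \<in> A" using NE[OF a] by blast
    have w0b: "(w0,b) \<in> A" using True w0 by blast
    have dab: "diagonal V A a b" using F1[OF T a b anb(1) w0 w0b] .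
    show False
    proof (cases "\<exists>w. (z,w) \<in> A \<and> (w,b) \<in> A \<and> (w,d) \<in> A")
      case True
      then obtain w where w: "(z,w) \<in> A" "(w,b) \<in> A" "(w,d) \<in> A" by blast
      have "diagonal V A b d" using F1[OF T b d anb(2) w] .
      then show False using H[OF tabd _ dab] anb by (auto simp: doubleton_eq_iff)
    next
      case nbd: False
      show False
      proof (cases "\<exists>w. (z,w) \<in> A \<and> (w,d) \<in> A \<and> (w,a) \<in> A")
        case True
        then obtain w where w: "(z,w) \<in> A" "(w,d) \<in> A" "(w,a) \<in> A" by blast
        have "diagonal V A d a" using F1[OF T d a anb(3)[symmetric] w] .
        then show False using H[OF tabd _ dab] anb by (auto simp: doubleton_eq_iff)
      next
        case nda: False
        obtain v where v: "(z,v) \<in> A" "(v,d) \<in> A" using NE[OF d] by blast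
        have "(v,a) \<notin> A" using nda v by blast
        then have dza: "diagonal V A z a" using ZX[OF T d a da v] by blast
        have "(w0,d) \<notin> A" using nbd w0 w0b by blast
        then have dw0: "(d,w0) \<in> A" using tot[OF d w0(1)] by blast
        have "triangle V A {b,d,w0}" using tri_I[OF T, of b d w0] bd dw0 w0b by simp
        then have daw: "diagonal V A a w0" using XW[OF tbda] neq[OF a w0(1)] by blast
        have "triangle V A {z,w0,a}" using Tz[OF a w0] .
        then show False using H[OF _ _ dza daw] zneq[OF w0(1)] azn by (auto simp: doubleton_eq_iff)
      qed
    qed
  next
    case False
    then obtain w1 where w1: "(z,w1) \<in> A" "(w1,a) \<in> A" "(w1,b) \<notin> A" by blast
    have dzb: "diagonal V A z b" using ZX[OF T a b ab w1] .
    show False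
    proof (cases "\<exists>w. (z,w) \<in> A \<and> (w,b) \<in> A \<and> (w,d) \<in> A")
      case True
      then obtain w where w: "(z,w) \<in> A" "(w,b) \<in> A" "(w,d) \<in> A" by blast
      show False
      proof (cases "(w,a) \<in> A")
        case True
        have "diagonal V A a b" using F1[OF T a b anb(1) w(1) True w(2)] .
        moreover have "diagonal V A b d" using F1[OF T b d anb(2) w] .
        ultimately show False using H[OF tabd] anb by (auto simp: doubleton_eq_iff)
      next
        case False
        have aw: "(a,w) \<in> A" using tot[OF a w(1) False] .
        have "triangle V A {a,w,d}" using tri_I[OF T, of a w d] aw w da by simp
        then have "triangle V A {a,d,w}" by (simp add: insert_commute)
        then have dbw: "diagonal V A b w" using XW[OF tadb] neq[OF b w(1)] by blast
        have "triangle V A {z,w,b}" using Tz[OF b w(1,2)] .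
        then show False using H[OF _ _ dzb dbw] zneq[OF w(1)] azn by (auto simp: doubleton_eq_iff)
      qed
    next
      case nbd: False
      obtain v where v: "(z,v) \<in> A" "(v,b) \<in> A" using NE[OF b] by blast
      have "(v,d) \<notin> A" using nbd v by blast
      then have dzd: "diagonal V A z d" using ZX[OF T b d bd v] by blast
      show False
      proof (cases "\<exists>w. (z,w) \<in> A \<and> (w,d) \<in> A \<and> (w,a) \<in> A")
        case True
        then obtain w where w: "(z,w) \<in> A" "(w,d) \<in> A" "(w,a) \<in> A" by blast
        have "(w,b) \<notin> A" using nbd w by blast
        then have bw: "(b,w) \<in> A" using tot[OF b w(1)] by blast
        have "triangle V A {a,b,w}" using tri_I[OF T, of a b w] ab bw w by simp
        then have ddw: "diagonal V A d w" using XW[OF tabd] neq[OF d w(1)] by blast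
        have "triangle V A {z,w,d}" using Tz[OF d w(1,2)] .
        then show False using H[OF _ _ dzd ddw] zneq[OF w(1)] azn by (auto simp: doubleton_eq_iff)
      next
        case nda: False
        obtain v' where v': "(z,v') \<in> A" "(v',d) \<in> A" using NE[OF d] by blast
        have "(v',a) \<notin> A" using nda v' by blast
        then have dza: "diagonal V A z a" using ZX[OF T d a da v'] by blast
        show False
        proof (cases "\<exists>w. (z,w) \<in> A \<and> (w,a) \<in> A \<and> (w,b) \<in> A")
          case True
          then obtain w where w: "(z,w) \<in> A" "(w,a) \<in> A" "(w,b) \<in> A" by blast
          have "(w,d) \<notin> A" using nbd w by blast
          then have dw: "(d,w) \<in> A" using tot[OF d w(1)] by blast
          have "triangle V A {b,d,w}" using tri_I[OF T, of b d w] bd dw w by simp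
          then have daw: "diagonal V A a w" using XW[OF tbda] neq[OF a w(1)] by blast
          have "triangle V A {z,w,a}" using Tz[OF a w(1,2)] .
          then show False using H[OF _ _ dza daw] zneq[OF w(1)] azn by (auto simp: doubleton_eq_iff)
        next
          case nab: False
          obtain wa where wa: "(z,wa) \<in> A" "(wa,a) \<in> A" using NE[OF a] by blast
          obtain y where y: "(z,y) \<in> A" "(y,b) \<in> A" using NE[OF b] by blast
          have wab: "(wa,b) \<notin> A" using nab wa by blast
          have yab: "(y,a) \<notin> A" using nab y by blast
          have bwa: "(b,wa) \<in> A" using tot[OF b wa(1) wab] .
          have ay: "(a,y) \<in> A" using tot[OF a y(1) yab] .
          have way: "wa \<noteq> y" using wab y by blast
          have ywa: "y \<noteq> wa" using way by blast
          show False
          proof (cases "(wa,y) \<in> A")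
            case True
            have dzw: "diagonal V A z wa" using ZW[OF T b y(1,2) wa(1) bwa True] .
            have "triangle V A {z,wa,a}" using Tz[OF a wa] .
            then show False using H[OF _ _ dza dzw] neq[OF a wa(1)] by (auto simp: doubleton_eq_iff)
          next
            case False
            have "y \<in> V" "wa \<in> V" using y wa tf(2) by auto
            then have yw: "(y,wa) \<in> A" using tf(5)[of wa y] False ywa by auto
            have dzy: "diagonal V A z y" using ZW[OF T a wa(1,2) y(1) ay yw] .
            have "triangle V A {z,y,b}" using Tz[OF b y] .
            then show False using H[OF _ _ dzb dzy] neq[OF b y(1)] by (auto simp: doubleton_eq_iff)
          qed
        qed
      qed
    qed
  qed
qed

lemma T5_no:
  assumes "min_fvs_size S R = 2" "acyclic R" "R \<subseteq> S \<times> S"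
  shows False
proof -
  have "induced_arcs R (S - {}) = R" using assms(3) unfolding induced_arcs_def by auto
  then have "feedback_vertex_set S R {}" using assms(2) unfolding feedback_vertex_set_def by simp
  then have "min_fvs_size S R = 0" unfolding min_fvs_size_def
    by (intro Least_eq_0) (rule exI[of _ "{}"], simp)
  then show False using assms(1) by simp
qed

theorem lemma6:
  fixes V :: "'a set" and A :: "('a \<times> 'a) set" and z :: 'a
  assumes "light V A"
    and "z \<in> V"
    and "\<forall>v\<in>V. in_degree V A z \<le> in_degree V A v"
  shows "T5_free (in_nbrs V A z) (induced_arcs A (in_nbrs V A z))"
  unfolding T5_free_def
proof
  assume "\<exists>S. S \<subseteq> in_nbrs V A z \<and> in_T5 S (induced_arcs (induced_arcs A (in_nbrs V A z)) S)"
  then obtain S where S: "S \<subseteq> in_nbrs V A z"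
    and t5: "in_T5 S (induced_arcs (induced_arcs A (in_nbrs V A z)) S)" by blast
  define R where "R = induced_arcs (induced_arcs A (in_nbrs V A z)) S"
  have T: "tournament V A" using assms(1) unfolding light_def by simp
  note tf = tour_facts[OF T]
  have R: "R = A \<inter> (S \<times> S)" using S unfolding R_def induced_arcs_def by auto
  have inS: "\<And>x. x \<in> S \<Longrightarrow> (x,z) \<in> A \<and> x \<in> V" using S unfolding in_nbrs_def by auto
  have "trans R"
  proof (rule transI)
    fix x y w assume xy: "(x,y) \<in> R" and yw: "(y,w) \<in> R"
    have xyA: "(x,y) \<in> A" "(y,w) \<in> A" "x \<in> S" "w \<in> S" using xy yw R by auto
    have "x \<noteq> w" using xyA tf(4) by metis
    moreover have "(w,x) \<notin> A"
    proof
      assume wx: "(w,x) \<in> A"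
      have "y \<in> S" using xy R by auto
      then show False using no_tri[OF assms(1,2,3), of x y w] inS xyA wx by blast
    qed
    ultimately have "(x,w) \<in> A" using tf(5)[of w x] inS xyA by blast
    then show "(x,w) \<in> R" using R xyA by auto
  qed
  then have "R\<^sup>+ = R" by (rule trancl_id)
  then have "acyclic R" unfolding acyclic_def using R tf(3) by auto
  moreover have "min_fvs_size S R = 2" using t5 unfolding R_def in_T5_def by simp
  moreover have "R \<subseteq> S \<times> S" using R by auto
  ultimately show False using T5_no by blast
qed

end
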